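(* Let $n>0$ be an integer, $C_1>0$ a constant, and let $P$ be a real monic polynomial of degree $n$ in one real variable. For each integer $k\geq 0$ let $\tilde{P}_k(x):=2^{-nk}P(2^kx)$ and $$E_k:=\left\{x\in\mathbb{R}:\ \left|\frac{\tilde{P}_k(x)}{\tilde{P}_k'(x)}\right|\leq\frac{4}{C_1}\ \text{and}\ \left(\frac{\tilde{P}_k}{\tilde{P}_k'}\right)'(x)\leq\frac{1}{8n}\right\}.$$ Then for any $\alpha\in(0,1)$, $\sum_{k\geq 0}|E_k|^{\alpha}\leq C$, where $C$ depends only on $n$ and $C_1$ (and not on the coefficients of $P$).
   Context: $|E|$ denotes the Lebesgue measure of $E\subset\mathbb{R}$. *)

theory Defs
  imports "HOL-Analysis.Analysis" "HOL-Computational_Algebra.Polynomial"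
begin

definition Ptil :: "nat \<Rightarrow> real poly \<Rightarrow> nat \<Rightarrow> real \<Rightarrow> real" where
  "Ptil n P k = (\<lambda>x. 2 powr (- (real n * real k)) * poly P (2 ^ k * x))"

text \<open>The set E_k. The quotient P~_k / P~_k' is only defined where P~_k' is nonzero,
  so such points are required (this excludes finitely many points only).\<close>
definition Eset :: "nat \<Rightarrow> real \<Rightarrow> real poly \<Rightarrow> nat \<Rightarrow> real set" where
  "Eset n C1 P k = {x. deriv (Ptil n P k) x \<noteq> 0 \<and>
      \<bar>Ptil n P k x / deriv (Ptil n P k) x\<bar> \<le> 4 / C1 \<and>
      deriv (\<lambda>y. Ptil n P k y / deriv (Ptil n P k) y) x \<le> 1 / (8 * real n)}"

end

theory Submission
  imports Defs "HOL-Computational_Algebra.Fundamental_Theorem_Algebra"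
begin

lemma logderiv:
  fixes root :: "nat \<Rightarrow> complex" and x :: complex
  assumes "\<forall>i<m. x \<noteq> root i"
  shows "poly (pderiv (\<Prod>i<m. [:-root i,1:])) x = poly (\<Prod>i<m. [:-root i,1:]) x * (\<Sum>i<m. 1/(x - root i))
       \<and> poly (pderiv (pderiv (\<Prod>i<m. [:-root i,1:]))) x = poly (\<Prod>i<m. [:-root i,1:]) x *
           ((\<Sum>i<m. 1/(x - root i))^2 - (\<Sum>i<m. 1/(x - root i)^2))"
  using assms
proof (induction m)
  case 0
  then show ?case by simp
next
  case (Suc m)
  define Q where "Q = (\<Prod>i<m. [:-root i,1:])"
  define s1 where "s1 = (\<Sum>i<m. 1/(x - root i))"
  define s2 where "s2 = (\<Sum>i<m. 1/(x - root i)^2)"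
  have IH: "poly (pderiv Q) x = poly Q x * s1" "poly (pderiv (pderiv Q)) x = poly Q x * (s1^2 - s2)"
    using Suc unfolding Q_def s1_def s2_def by auto
  have ne: "x - root m \<noteq> 0" using Suc.prems by auto
  have e1: "(\<Prod>i<Suc m. [:-root i,1:]) = [:-root m,1:] * Q" by (simp add: Q_def mult.commute)
  have p1: "pderiv [:-root m, 1:] = 1" by (simp add: pderiv_pCons)
  have d1: "pderiv ([:-root m,1:] * Q) = [:-root m,1:] * pderiv Q + Q"
    by (simp only: pderiv_mult p1 mult_1_left mult_1_right)
  have d2: "pderiv ([:-root m,1:] * pderiv Q + Q) = [:-root m,1:] * pderiv (pderiv Q) + 2 * pderiv Q"
    by (simp only: pderiv_add pderiv_mult p1 mult_1_left mult_1_right mult_2 add.assoc)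
  have S1: "(\<Sum>i<Suc m. 1/(x - root i)) = s1 + 1/(x - root m)" by (simp add: s1_def)
  have S2: "(\<Sum>i<Suc m. 1/(x - root i)^2) = s2 + 1/(x - root m)^2" by (simp add: s2_def)
  have P0: "poly ([:-root m,1:] * Q) x = (x - root m) * poly Q x" by (simp add: algebra_simps)
  have P1: "poly ([:-root m,1:] * pderiv Q + Q) x = (x - root m) * (poly Q x * s1) + poly Q x"
    using IH by (simp add: algebra_simps)
  have P2: "poly ([:-root m,1:] * pderiv (pderiv Q) + 2 * pderiv Q) x
      = (x - root m) * (poly Q x * (s1^2 - s2)) + 2 * (poly Q x * s1)"
  proof -
    have "poly ([:-root m,1:] * pderiv (pderiv Q) + 2 * pderiv Q) x
      = (x - root m) * poly (pderiv (pderiv Q)) x + 2 * poly (pderiv Q) x"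
      by (simp add: algebra_simps)
    then show ?thesis by (simp only: IH)
  qed
  have alg: "d * (q * s1) + q = d * q * (s1 + 1/d) \<and>
       d * (q * (s1^2 - s2)) + 2 * (q * s1) = d * q * ((s1 + 1/d)^2 - (s2 + 1/d^2))"
    if "d \<noteq> 0" for d q :: complex
    using that by (simp add: field_simps power2_eq_square)
  show ?case unfolding e1 d1 d2 S1 S2 P0 P1 P2
    by (rule alg[OF ne])
qed

lemma poly_of_real_map: "poly (map_poly of_real p) (of_real x :: complex) = of_real (poly p x)"
  by (induction p) (auto simp: map_poly_pCons)

lemma pderiv_of_real_map: "pderiv (map_poly (of_real :: real \<Rightarrow> complex) p) = map_poly of_real (pderiv p)"
  by (rule poly_eqI) (simp add: coeff_pderiv coeff_map_poly)

lemma core: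
  fixes P :: "real poly" and root :: "nat \<Rightarrow> complex" and y R :: real
  assumes fac: "map_poly of_real P = (\<Prod>i<n. [:-root i,1:])" and n: "n > 0"
    and d0: "poly (pderiv P) y \<noteq> 0" and hR: "\<bar>poly P y / poly (pderiv P) y\<bar> \<le> R"
    and hd: "(poly (pderiv P) y ^2 - poly P y * poly (pderiv (pderiv P)) y) / poly (pderiv P) y ^2 \<le> 1/(8*n)"
  shows "\<exists>i<n. (y - Re (root i))^2 + (Im (root i))^2 \<le> 2 * real n * R *\<bar>Im (root i)\<bar>"
proof -
  define p where "p = poly P y"
  define d where "d = poly (pderiv P) y"
  define dd where "dd = poly (pderiv (pderiv P)) y"
  define L where "L = (d^2 - p * dd) / d^2"
  have d0': "d \<noteq> 0" using d0 by (simp add: d_def)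
  have Ll: "L \<le> 1/(8*n)" using hd by (simp add: L_def p_def d_def dd_def)
  have n1: "real n \<ge> 1" using n by simp
  have p0: "p \<noteq> 0"
  proof
    assume "p = 0"
    then have "L = 1" using d0' by (simp add: L_def)
    with Ll n1 show False by (simp add: field_simps)
  qed
  have polyfac: "poly (\<Prod>i<n. [:-root i,1:]) (of_real y) = of_real p"
    using poly_of_real_map[of P y] by (simp add: fac p_def)
  have nr: "\<forall>i<n. (of_real y :: complex) \<noteq> root i"
  proof (intro allI impI notI)
    fix i assume i: "i < n" and e: "of_real y = root i"
    have "poly (\<Prod>i<n. [:-root i,1:]) (of_real y) = (\<Prod>j<n. of_real y - root j)"
      by (simp add: poly_prod)
    also have "\<dots> = 0" using i e by (intro prod_zero) auto
    finally show False using polyfac p0 by simp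
  qed
  define s1 where "s1 = (\<Sum>i<n. 1/((of_real y :: complex) - root i))"
  define s2 where "s2 = (\<Sum>i<n. 1/((of_real y :: complex) - root i)^2)"
  have LD: "poly (pderiv (\<Prod>i<n. [:-root i,1:])) (of_real y) = of_real p * s1"
     "poly (pderiv (pderiv (\<Prod>i<n. [:-root i,1:]))) (of_real y) = of_real p * (s1^2 - s2)"
    using logderiv[OF nr] polyfac unfolding s1_def s2_def by auto
  have cd: "of_real d = of_real p * s1"
    using LD(1) unfolding fac[symmetric] pderiv_of_real_map poly_of_real_map d_def by simp
  have cdd: "of_real dd = of_real p * (s1^2 - s2)"
    using LD(2) unfolding fac[symmetric] pderiv_of_real_map poly_of_real_map dd_def by simp
  define h where "h = p / d"
  define z where "z i = (of_real h :: complex) / (of_real y - root i)" for i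
  have s1e: "s1 = of_real d / of_real p" using cd p0 by (simp add: field_simps)
  have s2e: "s2 = s1^2 - of_real dd / of_real p" using cdd p0 by (simp add: field_simps)
  have sz: "(\<Sum>i<n. z i) = 1"
  proof -
    have "(\<Sum>i<n. z i) = of_real h * s1" unfolding z_def s1_def sum_distrib_left by simp
    also have "\<dots> = 1" using p0 d0' by (simp add: s1e h_def)
    finally show ?thesis .
  qed
  have sz2: "(\<Sum>i<n. (z i)^2) = of_real L"
  proof -
    have "(\<Sum>i<n. (z i)^2) = (of_real h)^2 * s2" unfolding z_def s2_def sum_distrib_left
      by (simp add: power_divide)
    also have "\<dots> = of_real L" using p0 d0'
      by (simp add: s2e s1e h_def L_def field_simps power2_eq_square)
    finally show ?thesis .
  qed
  have sRe: "(\<Sum>i<n. Re (z i)) = 1" using arg_cong[OF sz, of Re] by (simp add: Re_sum)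
  have sRe2: "(\<Sum>i<n. (Re (z i))^2 - (Im (z i))^2) = L"
    using arg_cong[OF sz2, of Re] by (simp add: Re_sum power2_eq_square)
  have CS: "(\<Sum>i<n. Re (z i))^2 \<le> (\<Sum>i<n. (Re (z i))^2) * real n"
    using sum_squared_le_sum_of_squares[of "\<lambda>i. Re (z i)" "{..<n}"] by simp
  have "(\<Sum>i<n. (Re (z i))^2) \<ge> 1 / n" using CS sRe n by (simp add: field_simps)
  then have sIm: "(\<Sum>i<n. (Im (z i))^2) \<ge> 7 / (8*n)"
    using sRe2 Ll n by (simp add: sum_subtractf field_simps)
  have "\<exists>i<n. (Im (z i))^2 \<ge> 7 / (8 * real n^2)"
  proof (rule ccontr)
    assume "\<not> ?thesis"
    then have lt: "\<forall>i\<in>{..<n}. (Im (z i))^2 < 7 / (8 * real n^2)" by force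
    have "(\<Sum>i<n. (Im (z i))^2) < (\<Sum>i<n. 7 / (8 * real n^2))"
      using lt n by (intro sum_strict_mono) auto
    also have "\<dots> = 7 / (8 * n)" using n by (simp add: power2_eq_square)
    finally show False using sIm by simp
  qed
  then obtain i where i: "i < n" and iz: "(Im (z i))^2 \<ge> 7 / (8 * real n^2)" by blast
  define r where "r = root i"
  define D where "D = (y - Re r)^2 + (Im r)^2"
  have D0: "D > 0"
  proof -
    have "of_real y \<noteq> r" using nr i by (simp add: r_def)
    then have "y - Re r \<noteq> 0 \<or> Im r \<noteq> 0" by (auto simp: complex_eq_iff)
    then show ?thesis unfolding D_def by (auto simp: sum_power2_gt_zero_iff)
  qed
  have Imz: "Im (z i) = h * Im r / D"
    unfolding z_def D_def r_def by (simp add: Im_divide power2_eq_square algebra_simps)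
  have hR': "\<bar>h\<bar> \<le> R" using hR by (simp add: h_def p_def d_def)
  have R0: "R \<ge> 0" using hR' by simp
  have "7 / (8 * real n^2) \<le> (h * Im r)^2 / D^2" using iz Imz by (simp add: power_divide)
  then have "7 * D^2 \<le> 8 * n^2 * (h * Im r)^2" using D0 n by (simp add: field_simps)
  also have "\<dots> \<le> 8 * n^2 * (R * Im r)^2"
  proof -
    have "h^2 \<le> R^2" using hR' R0
      by (metis abs_le_square_iff abs_of_nonneg)
    then show ?thesis by (intro mult_left_mono) (auto simp: power_mult_distrib intro!: mult_right_mono)
  qed
  finally have A: "7 * D^2 \<le> 8 * ((real n * R * Im r)^2)" by (simp add: power_mult_distrib)
  have B: "(2 * real n * R * \<bar>Im r\<bar>)^2 = 4 * (real n * R * Im r)^2" by (simp add: power_mult_distrib)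
  have "D^2 \<le> (2 * real n * R * \<bar>Im r\<bar>)^2"
    unfolding B using A zero_le_power2[of "real n * R * Im r"] by linarith
  then have "D \<le> 2 * real n * R * \<bar>Im r\<bar>"
    by (rule power2_le_imp_le) (use R0 in simp)
  then have "(y - Re (root i))^2 + (Im (root i))^2 \<le> 2 * real n * R *\<bar>Im (root i)\<bar>"
    unfolding D_def r_def .
  then show ?thesis using i by blast
qed


lemma Ptil_has_deriv:
  "(Ptil n P k has_real_derivative (2 powr (-(real n * real k)) * 2^k * poly (pderiv P) (2^k * x))) (at x)"
proof -
  have "((\<lambda>x. poly P (2^k * x)) has_real_derivative poly (pderiv P) (2^k*x) * 2^k) (at x)"
    by (rule DERIV_chain2[OF poly_DERIV]) (auto intro!: derivative_eq_intros)
  then have "((\<lambda>x. 2 powr (-(real n * real k)) * poly P (2^k * x)) has_real_derivative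
      2 powr (-(real n * real k)) * (poly (pderiv P) (2^k*x) * 2^k)) (at x)"
    by (rule DERIV_cmult)
  then show ?thesis unfolding Ptil_def by (simp add: mult_ac)
qed

lemma Ptil_deriv:
  "deriv (Ptil n P k) = (\<lambda>x. 2 powr (-(real n * real k)) * 2^k * poly (pderiv P) (2^k * x))"
  by (rule ext, rule DERIV_imp_deriv, rule Ptil_has_deriv)

lemma q_deriv:
  assumes "poly (pderiv P) (2^k * x) \<noteq> 0"
  shows "deriv (\<lambda>y. Ptil n P k y / deriv (Ptil n P k) y) x =
    (poly (pderiv P) (2^k*x) ^2 - poly P (2^k*x) * poly (pderiv (pderiv P)) (2^k*x)) / poly (pderiv P) (2^k*x) ^2"
proof -
  define c :: real where "c = 2 powr (-(real n * real k))"
  have c0: "c > 0" by (simp add: c_def)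
  define t :: real where "t = 2^k"
  have t0: "t > 0" by (simp add: t_def)
  have f: "(Ptil n P k has_real_derivative c * t * poly (pderiv P) (t * x)) (at x)"
    using Ptil_has_deriv[of n P k x] by (simp add: c_def t_def)
  have g: "(deriv (Ptil n P k) has_real_derivative c * t * (poly (pderiv (pderiv P)) (t * x) * t)) (at x)"
  proof -
    have "((\<lambda>x. poly (pderiv P) (t * x)) has_real_derivative poly (pderiv (pderiv P)) (t*x) * t) (at x)"
      by (rule DERIV_chain2[OF poly_DERIV]) (auto intro!: derivative_eq_intros)
    then have "((\<lambda>x. c * t * poly (pderiv P) (t * x)) has_real_derivative
      c * t * (poly (pderiv (pderiv P)) (t*x) * t)) (at x)"
      by (rule DERIV_cmult)
    then show ?thesis unfolding Ptil_deriv c_def t_def .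
  qed
  have gx: "deriv (Ptil n P k) x = c * t * poly (pderiv P) (t * x)"
    unfolding Ptil_deriv c_def t_def by simp
  have px: "Ptil n P k x = c * poly P (t * x)" unfolding Ptil_def c_def t_def by simp
  have ne: "deriv (Ptil n P k) x \<noteq> 0" using assms c0 t0 gx by (simp add: t_def)
  have "((\<lambda>y. Ptil n P k y / deriv (Ptil n P k) y) has_real_derivative
     ((c * t * poly (pderiv P) (t * x)) * deriv (Ptil n P k) x - Ptil n P k x * (c * t * (poly (pderiv (pderiv P)) (t * x) * t)))
       / (deriv (Ptil n P k) x * deriv (Ptil n P k) x)) (at x)"
    by (rule DERIV_divide[OF f g ne])
  then have "deriv (\<lambda>y. Ptil n P k y / deriv (Ptil n P k) y) x =
     ((c * t * poly (pderiv P) (t * x)) * deriv (Ptil n P k) x - Ptil n P k x * (c * t * (poly (pderiv (pderiv P)) (t * x) * t)))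
       / (deriv (Ptil n P k) x * deriv (Ptil n P k) x)"
    by (rule DERIV_imp_deriv)
  also have "\<dots> = (poly (pderiv P) (t*x) ^2 - poly P (t*x) * poly (pderiv (pderiv P)) (t*x)) / poly (pderiv P) (t*x) ^2"
    unfolding gx px using c0 t0 assms by (simp add: t_def field_simps power2_eq_square)
  finally show ?thesis by (simp add: t_def)
qed

lemma Eset_sub:
  fixes P :: "real poly" and root :: "nat \<Rightarrow> complex"
  assumes fac: "map_poly of_real P = (\<Prod>i<n. [:-root i,1:])" and n: "n > 0" and C1: "C1 > 0"
  shows "Eset n C1 P k \<subseteq> (\<Union>i<n. {x. (2^k*x - Re (root i))^2 + (Im (root i))^2
            \<le> 2 * real n * (2^k * (4/C1)) * \<bar>Im (root i)\<bar>})"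
proof
  fix x assume x: "x \<in> Eset n C1 P k"
  define c :: real where "c = 2 powr (-(real n * real k))"
  have c0: "c > 0" by (simp add: c_def)
  define y :: real where "y = 2^k * x"
  have gx: "deriv (Ptil n P k) x = c * 2^k * poly (pderiv P) y"
    unfolding Ptil_deriv c_def y_def by simp
  have px: "Ptil n P k x = c * poly P y" unfolding Ptil_def c_def y_def by simp
  have d0: "poly (pderiv P) y \<noteq> 0" using x gx unfolding Eset_def by auto
  have "\<bar>Ptil n P k x / deriv (Ptil n P k) x\<bar> \<le> 4 / C1" using x unfolding Eset_def by auto
  then have "\<bar>poly P y / poly (pderiv P) y\<bar> / 2^k \<le> 4 / C1"
    unfolding gx px using c0 by (simp add: abs_mult abs_divide field_simps)
  then have hR: "\<bar>poly P y / poly (pderiv P) y\<bar> \<le> 2^k * (4 / C1)"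
    by (metis pos_divide_le_eq zero_less_power zero_less_numeral mult.commute)
  have "deriv (\<lambda>y. Ptil n P k y / deriv (Ptil n P k) y) x \<le> 1 / (8 * real n)"
    using x unfolding Eset_def by auto
  then have hd: "(poly (pderiv P) y ^2 - poly P y * poly (pderiv (pderiv P)) y) / poly (pderiv P) y ^2 \<le> 1/(8*real n)"
    using q_deriv[of P k x n] d0 unfolding y_def by simp
  from core[OF fac n d0 hR hd] obtain i where "i < n"
    "(y - Re (root i))^2 + (Im (root i))^2 \<le> 2 * real n * (2^k * (4/C1)) * \<bar>Im (root i)\<bar>" by blast
  then show "x \<in> (\<Union>i<n. {x. (2^k*x - Re (root i))^2 + (Im (root i))^2
            \<le> 2 * real n * (2^k * (4/C1)) * \<bar>Im (root i)\<bar>})" unfolding y_def by blast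
qed


definition mb :: "real \<Rightarrow> real \<Rightarrow> nat \<Rightarrow> real" where
  "mb K b k = (if \<bar>b\<bar>/(K*2^k) \<le> 1 then 2*K * sqrt(\<bar>b\<bar>/(K*2^k)) else 0)"

definition Tset :: "real \<Rightarrow> real \<Rightarrow> real \<Rightarrow> nat \<Rightarrow> real set" where
  "Tset K a b k = (if \<bar>b\<bar>/(K*2^k) \<le> 1 then {a/2^k - K * sqrt(\<bar>b\<bar>/(K*2^k)) .. a/2^k + K * sqrt(\<bar>b\<bar>/(K*2^k))} else {})"

lemma Tset_compact: "compact (Tset K a b k)"
  unfolding Tset_def by auto

lemma Tset_measure: "K > 0 \<Longrightarrow> measure lebesgue (Tset K a b k) = mb K b k"
  unfolding Tset_def mb_def by auto

lemma interval_bound: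
  fixes K a b :: real assumes K: "K > 0"
  shows "{x. (2^k*x - a)^2 + b^2 \<le> K*2^k*\<bar>b\<bar>} \<subseteq> Tset K a b k"
proof
  fix x assume "x \<in> {x. (2^k*x - a)^2 + b^2 \<le> K*2^k*\<bar>b\<bar>}"
  then have h: "(2^k*x - a)^2 + b^2 \<le> K*2^k*\<bar>b\<bar>" by simp
  define t :: real where "t = 2^k"
  have t0: "t > 0" by (simp add: t_def)
  define u where "u = \<bar>b\<bar>/(K*t)"
  have h': "(t*x - a)^2 + b^2 \<le> K*t*\<bar>b\<bar>" using h by (simp add: t_def)
  have "\<bar>b\<bar> * \<bar>b\<bar> \<le> (K*t) * \<bar>b\<bar>"
  proof -
    have "\<bar>b\<bar> * \<bar>b\<bar> = b^2" by (simp add: power2_eq_square)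
    then show ?thesis using h' zero_le_power2[of "t*x-a"] by linarith
  qed
  then have "\<bar>b\<bar> \<le> K*t"
    by (cases "b = 0") (use K t0 mult_right_le_imp_le[of "\<bar>b\<bar>" "\<bar>b\<bar>" "K*t"] in auto)
  then have u1: "u \<le> 1" using K t0 by (simp add: u_def)
  have "(x - a/t)^2 = (t*x - a)^2 / t^2" using t0 by (simp add: field_simps power2_eq_square)
  also have "\<dots> \<le> K*t*\<bar>b\<bar> / t^2"
  proof (rule divide_right_mono)
    show "(t*x - a)^2 \<le> K*t*\<bar>b\<bar>" using h' zero_le_power2[of b] by linarith
  qed simp
  also have "\<dots> = K^2 * u" using t0 K by (simp add: u_def field_simps power2_eq_square)
  finally have "sqrt ((x - a/t)^2) \<le> sqrt (K^2 * u)" by (rule real_sqrt_le_mono)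
  then have "\<bar>x - a/t\<bar> \<le> K * sqrt u" using K by (simp add: real_sqrt_mult)
  then show "x \<in> Tset K a b k" using u1 unfolding Tset_def u_def t_def by auto
qed

lemma E_measure:
  fixes P :: "real poly" and root :: "nat \<Rightarrow> complex"
  assumes fac: "map_poly of_real P = (\<Prod>i<n. [:-root i,1:])" and n: "n > 0" and C1: "C1 > 0"
  shows "measure lebesgue (Eset n C1 P k) \<le> (\<Sum>i<n. mb (8*real n/C1) (Im (root i)) k)"
proof -
  define K where "K = 8*real n/C1"
  have K0: "K > 0" using n C1 by (simp add: K_def)
  define T where "T i = Tset K (Re (root i)) (Im (root i)) k" for i
  have sub: "Eset n C1 P k \<subseteq> (\<Union>i<n. T i)"
  proof -
    have eq: "2 * real n * (2^k * (4/C1)) = K * 2^k" by (simp add: K_def field_simps)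
    show ?thesis
      using Eset_sub[OF fac n C1, of k] interval_bound[OF K0] unfolding eq T_def by blast
  qed
  have cT: "compact (\<Union>i<n. T i)" unfolding T_def by (auto intro!: compact_UN Tset_compact)
  then have fT: "(\<Union>i<n. T i) \<in> fmeasurable lebesgue" by (rule lmeasurable_compact)
  have "measure lebesgue (Eset n C1 P k) \<le> measure lebesgue (\<Union>i<n. T i)"
  proof (cases "Eset n C1 P k \<in> sets lebesgue")
    case True
    then show ?thesis using measure_mono_fmeasurable[OF sub True fT] by simp
  next
    case False
    then show ?thesis by (simp add: measure_notin_sets)
  qed
  also have "\<dots> \<le> (\<Sum>i<n. measure lebesgue (T i))"
    by (rule measure_UNION_le) (auto simp: T_def intro!: lmeasurable_compact Tset_compact fmeasurableD)
  also have "\<dots> = (\<Sum>i<n. mb K (Im (root i)) k)" unfolding T_def using K0 by (simp add: Tset_measure)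
  finally show ?thesis unfolding K_def .
qed

lemma powr_add_le:
  fixes a b \<alpha> :: real assumes "a \<ge> 0" "b \<ge> 0" "0 < \<alpha>" "\<alpha> \<le> 1"
  shows "(a + b) powr \<alpha> \<le> a powr \<alpha> + b powr \<alpha>"
proof (cases "a + b = 0")
  case True
  then show ?thesis using assms by simp
next
  case False
  define s where "s = a + b"
  have s0: "s > 0" using False assms by (simp add: s_def)
  have ea: "a powr \<alpha> = s powr \<alpha> * (a/s) powr \<alpha>" using assms s0 by (simp add: powr_divide)
  have eb: "b powr \<alpha> = s powr \<alpha> * (b/s) powr \<alpha>" using assms s0 by (simp add: powr_divide)
  have la: "(a/s) powr \<alpha> \<ge> a/s"
  proof -
    have "(a/s) powr 1 \<le> (a/s) powr \<alpha>"
      by (rule powr_mono') (use assms s0 in \<open>auto simp: s_def\<close>)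
    then show ?thesis using assms s0 by simp
  qed
  have lb: "(b/s) powr \<alpha> \<ge> b/s"
  proof -
    have "(b/s) powr 1 \<le> (b/s) powr \<alpha>"
      by (rule powr_mono') (use assms s0 in \<open>auto simp: s_def\<close>)
    then show ?thesis using assms s0 by simp
  qed
  have "s powr \<alpha> = s powr \<alpha> * (a/s + b/s)" using s0 by (simp add: s_def add_divide_distrib[symmetric])
  also have "\<dots> \<le> s powr \<alpha> * ((a/s) powr \<alpha> + (b/s) powr \<alpha>)"
    using la lb by (intro mult_left_mono) auto
  finally show ?thesis unfolding s_def[symmetric] ea eb by (simp add: algebra_simps)
qed

lemma powr_sum_le:
  fixes f :: "'a \<Rightarrow> real" assumes "finite I" "\<And>i. f i \<ge> 0" "0 < \<alpha>" "\<alpha> \<le> 1"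
  shows "(\<Sum>i\<in>I. f i) powr \<alpha> \<le> (\<Sum>i\<in>I. f i powr \<alpha>)"
  using assms(1)
proof (induction I rule: finite_induct)
  case empty
  then show ?case by simp
next
  case (insert x F)
  have "(\<Sum>i\<in>insert x F. f i) powr \<alpha> = (f x + (\<Sum>i\<in>F. f i)) powr \<alpha>" using insert by simp
  also have "\<dots> \<le> f x powr \<alpha> + (\<Sum>i\<in>F. f i) powr \<alpha>"
    by (rule powr_add_le) (use assms in \<open>auto intro: sum_nonneg\<close>)
  also have "\<dots> \<le> f x powr \<alpha> + (\<Sum>i\<in>F. f i powr \<alpha>)" using insert by simp
  finally show ?case using insert by simp
qed


lemma geo:
  fixes u0 \<beta> :: real assumes u0: "u0 \<ge> 0" and b: "\<beta> > 0"
  defines "g \<equiv> (\<lambda>k::nat. if u0/2^k \<le> 1 then (u0/2^k) powr \<beta> else 0)"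
  shows "summable g \<and> suminf g \<le> 1 / (1 - (1/2) powr \<beta>)"
proof -
  define q :: real where "q = (1/2) powr \<beta>"
  have t1: "1 < (2::real) powr \<beta>" using powr_less_cancel_iff[of 2 0 \<beta>] b by simp
  have qe: "q = 1 / 2 powr \<beta>" by (simp add: q_def powr_divide)
  have q0: "q > 0" and q1: "q < 1" using t1 by (auto simp: qe)
  obtain k1 :: nat where "u0 < 2^k1" using real_arch_pow[of 2 u0] by auto
  then have ex: "u0/2^k1 \<le> 1" by (simp add: field_simps)
  define k0 where "k0 = (LEAST k::nat. u0/2^k \<le> 1)"
  have k0: "u0/2^k0 \<le> 1" unfolding k0_def by (rule LeastI[of _ k1], rule ex)
  define G where "G k = (if k0 \<le> k then q^(k - k0) else 0)" for k
  have gG: "g k \<le> G k" for k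
  proof (cases "k0 \<le> k")
    case False
    then have "k < k0" by simp
    then have "\<not> u0/2^k \<le> 1" unfolding k0_def by (rule not_less_Least)
    then show ?thesis using False by (simp add: g_def G_def)
  next
    case True
    define j where "j = k - k0"
    have kj: "k = k0 + j" using True by (simp add: j_def)
    have e: "u0/2^k = (u0/2^k0) * (1/2)^j" by (simp add: kj power_add field_simps)
    have le: "u0/2^k \<le> (1/2)^j" unfolding e using k0 u0
      by (intro mult_left_le_one_le) (auto simp: power_le_one)
    have "(u0/2^k) powr \<beta> \<le> ((1/2)^j) powr \<beta>"
      by (rule powr_mono2) (use b u0 le in auto)
    also have "\<dots> = q^j"
    proof -
      have "((1/2::real)^j) powr \<beta> = ((1/2) powr real j) powr \<beta>" by (simp add: powr_realpow)
      also have "\<dots> = ((1/2) powr \<beta>) powr real j" by (simp add: powr_powr mult.commute)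
      also have "\<dots> = q^j" unfolding q_def by (rule powr_realpow) simp
      finally show ?thesis .
    qed
    finally show ?thesis using True q0 by (simp add: g_def G_def j_def)
  qed
  have g0: "g k \<ge> 0" for k by (simp add: g_def)
  have "(\<lambda>i. G (i + k0)) sums (1 / (1 - q))"
    using geometric_sums[of q] q0 q1 by (simp add: G_def)
  then have Gs: "G sums (1/(1-q))"
    by (subst (asm) sums_zero_iff_shift) (auto simp: G_def)
  have sg: "summable g"
    by (rule summable_comparison_test'[of G 0]) (use Gs gG g0 in \<open>auto simp: sums_iff\<close>)
  have "suminf g \<le> suminf G" by (rule suminf_le) (use gG sg Gs in \<open>auto simp: sums_iff\<close>)
  also have "\<dots> = 1/(1-q)" using Gs by (simp add: sums_iff)
  finally show ?thesis using sg unfolding q_def by simp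
qed


lemma mb_powr:
  assumes K: "K > 0" and a: "\<alpha> > 0"
  shows "mb K b k powr \<alpha> = (2*K) powr \<alpha> *
    (if (\<bar>b\<bar>/K)/2^k \<le> 1 then ((\<bar>b\<bar>/K)/2^k) powr (\<alpha>/2) else 0)"
proof -
  have e: "\<bar>b\<bar>/(K*2^k) = (\<bar>b\<bar>/K)/2^k" by simp
  have "(2*K * sqrt u) powr \<alpha> = (2*K) powr \<alpha> * u powr (\<alpha>/2)" if "u \<ge> 0" for u
  proof -
    have "(2*K * sqrt u) powr \<alpha> = (2*K) powr \<alpha> * (sqrt u) powr \<alpha>"
      using K that by (simp add: powr_mult)
    moreover have "(sqrt u) powr \<alpha> = u powr (\<alpha>/2)"
    proof -
      have "sqrt u = u powr (1/2)" using that by (simp add: powr_half_sqrt)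
      then show ?thesis by (simp add: powr_powr)
    qed
    ultimately show ?thesis by simp
  qed
  then show ?thesis using K unfolding mb_def e by auto
qed

theorem lemma3p4:
  fixes n :: nat and C1 \<alpha> :: real
  assumes "n > 0" and "C1 > 0" and "0 < \<alpha>" and "\<alpha> < 1"
  shows "\<exists>C. \<forall>P :: real poly. degree P = n \<and> lead_coeff P = 1 \<longrightarrow>
           summable (\<lambda>k. measure lebesgue (Eset n C1 P k) powr \<alpha>) \<and>
           (\<Sum>k. measure lebesgue (Eset n C1 P k) powr \<alpha>) \<le> C"
proof -
  define K where "K = 8 * real n / C1"
  have K0: "K > 0" using assms by (simp add: K_def)
  define B where "B = (2*K) powr \<alpha> * (1 / (1 - (1/2) powr (\<alpha>/2)))"
  show ?thesis
  proof (intro exI[of _ "real n * B"] allI impI)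
    fix P :: "real poly" assume P: "degree P = n \<and> lead_coeff P = 1"
    define p where "p = (map_poly of_real P :: complex poly)"
    have dp: "degree p = n" using P by (simp add: p_def degree_map_poly)
    have lp: "lead_coeff p = 1" using P dp unfolding p_def by (subst coeff_map_poly) auto
    obtain root where r: "smult (lead_coeff p) (\<Prod>i<degree p. [:-root i, 1:]) = p"
      using complex_poly_decompose' by blast
    have lp': "coeff p n = 1" using lp dp by simp
    have "smult 1 (\<Prod>i<n. [:-root i,1:]) = p" using r[unfolded dp lp'] .
    then have "p = (\<Prod>i<n. [:-root i,1:])" by simp
    then have fac: "map_poly of_real P = (\<Prod>i<n. [:-root i,1:])" unfolding p_def .
    define g where "g i k = (if (\<bar>Im (root i)\<bar>/K)/2^k \<le> 1
        then ((\<bar>Im (root i)\<bar>/K)/2^k) powr (\<alpha>/2) else 0)" for i k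
    have gs: "summable (g i) \<and> suminf (g i) \<le> 1 / (1 - (1/2) powr (\<alpha>/2))" for i
      unfolding g_def using geo[of "\<bar>Im (root i)\<bar>/K" "\<alpha>/2"] K0 assms by simp
    define F where "F k = (\<Sum>i<n. (2*K) powr \<alpha> * g i k)" for k
    have bound: "measure lebesgue (Eset n C1 P k) powr \<alpha> \<le> F k" for k
    proof -
      have "measure lebesgue (Eset n C1 P k) powr \<alpha> \<le> (\<Sum>i<n. mb K (Im (root i)) k) powr \<alpha>"
        using E_measure[OF fac assms(1,2), of k] assms by (intro powr_mono2) (auto simp: K_def)
      also have "\<dots> \<le> (\<Sum>i<n. mb K (Im (root i)) k powr \<alpha>)"
        by (rule powr_sum_le) (use assms K0 in \<open>auto simp: mb_def\<close>)
      also have "\<dots> = F k" unfolding F_def g_def using mb_powr[OF K0 assms(3)] by simp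
      finally show ?thesis .
    qed
    have sF: "summable F" unfolding F_def
      by (intro summable_sum summable_mult) (use gs in auto)
    have nn: "measure lebesgue (Eset n C1 P k) powr \<alpha> \<ge> 0" for k by simp
    have sE: "summable (\<lambda>k. measure lebesgue (Eset n C1 P k) powr \<alpha>)"
      by (rule summable_comparison_test'[OF sF, of 0]) (use bound nn in auto)
    have "(\<Sum>k. measure lebesgue (Eset n C1 P k) powr \<alpha>) \<le> suminf F"
      by (rule suminf_le) (use bound sE sF in auto)
    also have "\<dots> = (\<Sum>i<n. \<Sum>k. (2*K) powr \<alpha> * g i k)" unfolding F_def
      by (rule suminf_sum) (intro summable_mult, use gs in auto)
    also have "\<dots> = (\<Sum>i<n. (2*K) powr \<alpha> * suminf (g i))"
      by (intro sum.cong refl suminf_mult) (use gs in auto)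
    also have "\<dots> \<le> (\<Sum>i<n. B)" unfolding B_def
      by (intro sum_mono mult_left_mono) (use gs in auto)
    also have "\<dots> = real n * B" by simp
    finally show "summable (\<lambda>k. measure lebesgue (Eset n C1 P k) powr \<alpha>) \<and>
           (\<Sum>k. measure lebesgue (Eset n C1 P k) powr \<alpha>) \<le> real n * B" using sE by simp
  qed
qed

end
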